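(* Let $t,s$ be two trees of $\mathcal{A}$ different from $|$, with $k$ and $l$ as below. Then $$t\prec s=\sum_{\substack{\sigma\in\mathrm{QSh}(k,l)\\ \sigma^{-1}(1)=\{1\}}}\sigma(t,s),\qquad t\cdot s=\sum_{\substack{\sigma\in\mathrm{QSh}(k,l)\\ \sigma^{-1}(1)=\{1,k+1\}}}\sigma(t,s),\qquad t\succ s=\sum_{\substack{\sigma\in\mathrm{QSh}(k,l)\\ \sigma^{-1}(1)=\{k+1\}}}\sigma(t,s).$$
   Context: Trees: planar rooted trees in which every internal vertex has at least two children; the root vertex hangs from a trunk edge; leaves are edges without upper vertex; $|$ is the one-leaf tree. $\mathcal A$ is the $\mathbb K$-vector space with basis these trees, with products defined recursively: $x_0\vee\cdots\vee x_k$ ($k\ge1$) grafts trees left to right on a new root vertex; for $x=x^{(0)}\vee\cdots\vee x^{(k)}$, $y=y^{(0)}\vee\cdots\vee y^{(l)}$: $x\prec y=x^{(0)}\vee\cdots\vee x^{(k-1)}\vee(x^{(k)}*y)$, $x\cdot y=x^{(0)}\vee\cdots\vee x^{(k-1)}\vee(x^{(k)}*y^{(0)})\vee y^{(1)}\vee\cdots\vee y^{(l)}$, $x\succ y=(x*y^{(0)})\vee y^{(1)}\vee\cdots\vee y^{(l)}$, with $*=\prec+\cdot+\succ$ and $|*z=z*|=z$. A $(k,l)$-quasi-shuffle is a surjection $\sigma:\{1,\dots,k+l\}\to\{1,\dots,n\}$ with $\sigma(1)<\cdots<\sigma(k)$ and $\sigma(k+1)<\cdots<\sigma(k+l)$;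 $\mathrm{QSh}(k,l)$ is their set. Let $v_1,\dots,v_k$ be the internal vertices (from the root up) on the right-most branch of $t$ (path from the root always to the right-most child), and $F_i$ the forest of subtrees at the children of $v_i$ other than the right-most one; let $w_1,\dots,w_l$ be the internal vertices on the left-most branch of $s$ and $F_{k+j}$ the forest of subtrees at the children of $w_j$ other than the left-most one. $\sigma(t,s)$ is the tree with a ladder of internal vertices $u_1$ (root),$\dots,u_n$ ($u_{p+1}$ child of $u_p$, ladder child of $u_n$ a leaf), the children of $u_p$ being from left to right: the trees of $F_i$ if $\sigma(i)=p$ ($i\le k$), the ladder child, the trees of $F_{k+j}$ if $\sigma(k+j)=p$. *)

theory Defs
  imports Main "HOL-Library.Multiset" "HOL-Library.FuncSet"
begin

text \<open>Leaf is the one-leaf tree (written as a bar in the paper);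
  Node cs is the tree whose root vertex carries the subtrees cs from left to right,
  i.e. the grafting of the trees cs on a new root vertex.\<close>
datatype tree = Leaf | Node "tree list"

fun wf_tree :: "tree \<Rightarrow> bool" where
  "wf_tree Leaf = True"
| "wf_tree (Node cs) = (2 \<le> length cs \<and> list_all wf_tree cs)"

lemma size_mem_less: "c \<in> set cs \<Longrightarrow> size c < size (Node cs)"
  by (induction cs) auto

lemma size_last_less: "cs \<noteq> [] \<Longrightarrow> size (last cs) < size (Node cs)"
  by (rule size_mem_less) simp

lemma size_hd_less: "cs \<noteq> [] \<Longrightarrow> size (hd cs) < size (Node cs)"
  by (rule size_mem_less) simp

text \<open>Elements of the span of trees with nonnegative integer coefficients are
  represented as multisets of trees (all structure constants are in N).\<close>

fun combos :: "tree multiset list \<Rightarrow> tree list multiset" where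
  "combos [] = {#[]#}"
| "combos (M # Ms) = sum_mset (image_mset (\<lambda>x. image_mset ((#) x) (combos Ms)) M)"

text \<open>Multilinear extension of grafting on a new root vertex.\<close>
definition graft :: "tree multiset list \<Rightarrow> tree multiset" where
  "graft Ms = image_mset Node (combos Ms)"

datatype opk = Prec | Dot | Succ | Star

function prod :: "opk \<Rightarrow> tree \<Rightarrow> tree \<Rightarrow> tree multiset" where
  "prod Star x y =
     (if x = Leaf then {#y#} else if y = Leaf then {#x#}
      else prod Prec x y + prod Dot x y + prod Succ x y)"
| "prod Prec Leaf y = {#}"
| "prod Prec (Node xs) y =
     (if xs = [] then {#} else
      graft (map (\<lambda>a. {#a#}) (butlast xs) @ [prod Star (last xs) y]))"
| "prod Dot Leaf y = {#}"
| "prod Dot (Node xs) Leaf = {#}"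
| "prod Dot (Node xs) (Node ys) =
     (if xs = [] \<or> ys = [] then {#} else
      graft (map (\<lambda>a. {#a#}) (butlast xs) @ [prod Star (last xs) (hd ys)]
             @ map (\<lambda>a. {#a#}) (tl ys)))"
| "prod Succ x Leaf = {#}"
| "prod Succ x (Node ys) =
     (if ys = [] then {#} else
      graft (prod Star x (hd ys) # map (\<lambda>a. {#a#}) (tl ys)))"
  by pat_completeness auto
termination
  by (relation "measure (\<lambda>(op, x, y). 2 * (size x + size y) + (if op = Star then 1 else 0))")
     (auto, (fastforce dest: size_last_less size_hd_less)+)

definition prec :: "tree \<Rightarrow> tree \<Rightarrow> tree multiset" where "prec = prod Prec"
definition dotp :: "tree \<Rightarrow> tree \<Rightarrow> tree multiset" where "dotp = prod Dot"
definition succ :: "tree \<Rightarrow> tree \<Rightarrow> tree multiset" where "succ = prod Succ"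

text \<open>rbranch t lists, from the root up, the forests F_i of non-right-most children
  of the internal vertices on the right-most branch of t.\<close>
function rbranch :: "tree \<Rightarrow> tree list list" where
  "rbranch Leaf = []"
| "rbranch (Node cs) = (if cs = [] then [[]] else butlast cs # rbranch (last cs))"
  by pat_completeness auto
termination
  by (relation "measure size") (auto dest: size_last_less)

text \<open>lbranch s lists, from the root up, the forests of non-left-most children
  of the internal vertices on the left-most branch of s.\<close>
function lbranch :: "tree \<Rightarrow> tree list list" where
  "lbranch Leaf = []"
| "lbranch (Node cs) = (if cs = [] then [[]] else tl cs # lbranch (hd cs))"
  by pat_completeness auto
termination
  by (relation "measure size") (auto dest: size_hd_less)

definition QSh :: "nat \<Rightarrow> nat \<Rightarrow> (nat \<Rightarrow> nat) set" where
  "QSh k l = {\<sigma>. \<sigma> \<in> extensional {1..k+l}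
                 \<and> (\<exists>n. \<sigma> ` {1..k+l} = {1..n})
                 \<and> strict_mono_on {1..k} \<sigma>
                 \<and> strict_mono_on {k+1..k+l} \<sigma>}"

text \<open>ladder F \<sigma> k l m p builds the part of the ladder from vertex u_p upwards,
  with m internal vertices u_p, ..., u_(p+m-1); F is the list F_1, ..., F_(k+l)
  (0-indexed).\<close>
primrec ladder :: "tree list list \<Rightarrow> (nat \<Rightarrow> nat) \<Rightarrow> nat \<Rightarrow> nat \<Rightarrow> nat \<Rightarrow> nat \<Rightarrow> tree" where
  "ladder F \<sigma> k l 0 p = Leaf"
| "ladder F \<sigma> k l (Suc m) p =
     Node (concat (map (\<lambda>i. F ! (i - 1)) (filter (\<lambda>i. \<sigma> i = p) [1..<k+1]))
           @ [ladder F \<sigma> k l m (Suc p)]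
           @ concat (map (\<lambda>i. F ! (i - 1)) (filter (\<lambda>i. \<sigma> i = p) [k+1..<k+l+1])))"

definition sigma_tree :: "(nat \<Rightarrow> nat) \<Rightarrow> tree \<Rightarrow> tree \<Rightarrow> tree" where
  "sigma_tree \<sigma> t s =
     (let k = length (rbranch t); l = length (lbranch s); n = card (\<sigma> ` {1..k+l})
      in ladder (rbranch t @ lbranch s) \<sigma> k l n 1)"

end

theory Submission
  imports Defs
begin


lemma combos_singles: "combos (map (\<lambda>a. {#a#}) as @ Ms) = image_mset ((@) as) (combos Ms)"
  by (induction as) (simp_all add: multiset.map_comp o_def)

lemma sum_mset_single: "sum_mset (image_mset (\<lambda>x. {#f x#}) M) = image_mset f M"
  by (induction M) auto

lemma combos_last: "combos (M # map (\<lambda>a. {#a#}) bs) = image_mset (\<lambda>x. x # bs) M"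
proof -
  have "combos (map (\<lambda>a. {#a#}) bs) = {#bs#}"
    using combos_singles[of bs "[]"] by simp
  then show ?thesis by (simp add: sum_mset_single)
qed

lemma graft_mid: "graft (map (\<lambda>a. {#a#}) as @ M # map (\<lambda>a. {#a#}) bs) = image_mset (\<lambda>x. Node (as @ x # bs)) M"
  unfolding graft_def combos_singles combos_last by (simp add: multiset.map_comp o_def)

lemma image_mset_sum_set: "image_mset f (\<Sum>x\<in>A. g x) = (\<Sum>x\<in>A. image_mset f (g x))"
  by (induction A rule: infinite_finite_induct) auto

lemma QSh_finite: "finite (QSh k l)"
proof (rule finite_subset)
  show "QSh k l \<subseteq> PiE {1..k+l} (\<lambda>_. {1..k+l})"
  proof
    fix \<sigma> assume "\<sigma> \<in> QSh k l"
    then obtain n where e: "\<sigma> \<in> extensional {1..k+l}" and im: "\<sigma> ` {1..k+l} = {1..n}"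
      unfolding QSh_def by blast
    have "n = card (\<sigma> ` {1..k+l})" using im by simp
    also have "\<dots> \<le> k + l" using card_image_le[of "{1..k+l}" \<sigma>] by simp
    finally have "n \<le> k + l" .
    moreover have "\<sigma> i \<in> {1..n}" if "i \<in> {1..k+l}" for i
      using im that by (metis imageI)
    ultimately have "\<forall>i\<in>{1..k+l}. \<sigma> i \<in> {1..k+l}" by (meson atLeastAtMost_iff le_trans)
    with e show "\<sigma> \<in> PiE {1..k+l} (\<lambda>_. {1..k+l})" by (auto simp: PiE_def)
  qed
qed (simp add: finite_PiE)

lemma ladder_shift:
  assumes L: "\<And>q. q \<ge> 1 \<Longrightarrow> concat (map (\<lambda>i. FF!(i-1)) (filter (\<lambda>i. \<sigma> i = Suc q) [1..<k+1]))
      = concat (map (\<lambda>i. FF'!(i-1)) (filter (\<lambda>i. \<tau> i = q) [1..<k'+1]))"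
  and R: "\<And>q. q \<ge> 1 \<Longrightarrow> concat (map (\<lambda>i. FF!(i-1)) (filter (\<lambda>i. \<sigma> i = Suc q) [k+1..<k+l+1]))
      = concat (map (\<lambda>i. FF'!(i-1)) (filter (\<lambda>i. \<tau> i = q) [k'+1..<k'+l'+1]))"
  shows "p \<ge> 1 \<Longrightarrow> ladder FF \<sigma> k l m (Suc p) = ladder FF' \<tau> k' l' m p"
proof (induction m arbitrary: p)
  case 0 then show ?case by simp
next
  case (Suc m)
  then show ?case using L[of p] R[of p] by simp
qed

lemma QSh_pre1:
  assumes "\<sigma> \<in> QSh k l" "k + l \<ge> 1"
  shows "{i\<in>{1..k+l}. \<sigma> i = 1} = {1} \<or> {i\<in>{1..k+l}. \<sigma> i = 1} = {1,k+1} \<or> {i\<in>{1..k+l}. \<sigma> i = 1} = {k+1}"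
proof -
  from assms(1) obtain n where im: "\<sigma> ` {1..k+l} = {1..n}" and ml: "strict_mono_on {1..k} \<sigma>"
    and mr: "strict_mono_on {k+1..k+l} \<sigma>" unfolding QSh_def by blast
  have ge: "\<sigma> i \<ge> 1" if "i \<in> {1..k+l}" for i using im that by auto
  have "\<sigma> 1 \<in> \<sigma> ` {1..k+l}" using assms(2) by auto
  then have "{1..n} \<noteq> {}" using im by auto
  then have "1 \<in> \<sigma> ` {1..k+l}" using im by auto
  then have ne: "{i\<in>{1..k+l}. \<sigma> i = 1} \<noteq> {}" by auto
  have sub: "{i\<in>{1..k+l}. \<sigma> i = 1} \<subseteq> {1, k+1}"
  proof
    fix i assume i: "i \<in> {i\<in>{1..k+l}. \<sigma> i = 1}"
    show "i \<in> {1, k+1}"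
    proof (cases "i \<le> k")
      case True
      show ?thesis
      proof (rule ccontr)
        assume "i \<notin> {1, k+1}"
        then have "1 < i" using i by auto
        then have "\<sigma> 1 < \<sigma> i" using ml True by (auto intro: strict_mono_onD)
        then show False using i ge[of 1] True by auto
      qed
    next
      case False
      show ?thesis
      proof (rule ccontr)
        assume "i \<notin> {1, k+1}"
        then have "k+1 < i" using i False by auto
        then have "\<sigma> (k+1) < \<sigma> i" using strict_mono_onD[OF mr, of "k+1" i] i by auto
        moreover have "\<sigma> (k+1) \<ge> 1" using ge[of "k+1"] i \<open>k+1 < i\<close> by auto
        ultimately show False using i by auto
      qed
    qed
  qed
  show ?thesis using ne sub by auto
qed




locale qext =
  fixes k l k' l' :: nat and D :: "nat set" and pos unpos :: "nat \<Rightarrow> nat"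
  assumes D_sub: "D \<subseteq> {1..k+l}" and D_ne: "D \<noteq> {}" and D_vals: "\<And>d. d \<in> D \<Longrightarrow> d = 1 \<or> d = k+1"
  and pos_in: "\<And>i. i \<in> {1..k'+l'} \<Longrightarrow> pos i \<in> {1..k+l} \<and> pos i \<notin> D \<and> unpos (pos i) = i"
  and unpos_in: "\<And>j. j \<in> {1..k+l} \<Longrightarrow> j \<notin> D \<Longrightarrow> unpos j \<in> {1..k'+l'} \<and> pos (unpos j) = j"
  and pos_left: "\<And>i. i \<in> {1..k'+l'} \<Longrightarrow> (i \<le> k') = (pos i \<le> k)"
  and pos_mono: "\<And>i j. i \<in> {1..k'+l'} \<Longrightarrow> j \<in> {1..k'+l'} \<Longrightarrow> i < j \<Longrightarrow> pos i < pos j"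
  and filt_left: "filter (\<lambda>i. i \<notin> D) [1..<k+1] = map pos [1..<k'+1]"
  and filt_right: "filter (\<lambda>i. i \<notin> D) [k+1..<k+l+1] = map pos [k'+1..<k'+l'+1]"
begin

definition qx :: "(nat \<Rightarrow> nat) \<Rightarrow> nat \<Rightarrow> nat" where
  "qx \<tau> = restrict (\<lambda>i. if i \<in> D then 1 else Suc (\<tau> (unpos i))) {1..k+l}"

definition shr :: "(nat \<Rightarrow> nat) \<Rightarrow> nat \<Rightarrow> nat" where
  "shr \<sigma> = restrict (\<lambda>i. \<sigma> (pos i) - 1) {1..k'+l'}"

definition TT :: "(nat \<Rightarrow> nat) set" where
  "TT = {\<sigma> \<in> QSh k l. {i\<in>{1..k+l}. \<sigma> i = 1} = D}"

lemma unpos_mono: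
  assumes "i \<in> {1..k+l}" "j \<in> {1..k+l}" "i \<notin> D" "j \<notin> D" "i < j"
  shows "unpos i < unpos j"
proof (rule ccontr)
  assume "\<not> unpos i < unpos j"
  then have "unpos j < unpos i \<or> unpos j = unpos i" by auto
  then show False
  proof
    assume "unpos j < unpos i"
    then have "pos (unpos j) < pos (unpos i)" using pos_mono unpos_in assms by blast
    then show False using unpos_in assms by auto
  next
    assume "unpos j = unpos i"
    then have "pos (unpos j) = pos (unpos i)" by simp
    then show False using unpos_in assms by auto
  qed
qed

lemma qx_pos: "i \<in> {1..k'+l'} \<Longrightarrow> qx \<tau> (pos i) = Suc (\<tau> i)"
  using pos_in[of i] unfolding qx_def by auto

lemma qx_D: "i \<in> D \<Longrightarrow> qx \<tau> i = 1"
  using D_sub unfolding qx_def by auto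

lemma qx_QSh:
  assumes "\<tau> \<in> QSh k' l'"
  shows "qx \<tau> \<in> TT" and "card (qx \<tau> ` {1..k+l}) = Suc (card (\<tau> ` {1..k'+l'}))"
proof -
  from assms obtain n where im: "\<tau> ` {1..k'+l'} = {1..n}" and ml: "strict_mono_on {1..k'} \<tau>"
    and mr: "strict_mono_on {k'+1..k'+l'} \<tau>" unfolding QSh_def by blast
  have tv: "\<tau> i \<in> {1..n}" if "i \<in> {1..k'+l'}" for i using im that by (metis imageI)
  have im2: "qx \<tau> ` {1..k+l} = {1..Suc n}"
  proof (rule set_eqI, rule iffI)
    fix y assume "y \<in> qx \<tau> ` {1..k+l}"
    then obtain i where i: "i \<in> {1..k+l}" "y = qx \<tau> i" by auto
    show "y \<in> {1..Suc n}"
    proof (cases "i \<in> D")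
      case True then show ?thesis using i qx_D[OF True, of \<tau>] by simp
    next
      case False
      then have "y = Suc (\<tau> (unpos i))" using i unfolding qx_def by auto
      then show ?thesis using tv[of "unpos i"] unpos_in[OF i(1) False] by auto
    qed
  next
    fix y assume y: "y \<in> {1..Suc n}"
    show "y \<in> qx \<tau> ` {1..k+l}"
    proof (cases "y = 1")
      case True
      obtain d where d: "d \<in> D" using D_ne by auto
      then have "qx \<tau> d = y" using True qx_D by simp
      moreover have "d \<in> {1..k+l}" using d D_sub by blast
      ultimately show ?thesis by (rule image_eqI[OF sym])
    next
      case False
      then have "y - 1 \<in> {1..n}" using y by auto
      then have "y - 1 \<in> \<tau> ` {1..k'+l'}" using im by simp
      then obtain i where i: "i \<in> {1..k'+l'}" "y - 1 = \<tau> i" by (rule imageE) simp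
      moreover have "Suc (\<tau> i) = y" using i(2) False y by (cases y) auto
      ultimately have "qx \<tau> (pos i) = y" using qx_pos[OF i(1), of \<tau>] by simp
      moreover have "pos i \<in> {1..k+l}" using pos_in[OF i(1)] by blast
      ultimately show ?thesis by (rule image_eqI[OF sym])
    qed
  qed
  have pre: "{i\<in>{1..k+l}. qx \<tau> i = 1} = D"
  proof -
    have "qx \<tau> i \<noteq> 1" if "i \<in> {1..k+l}" "i \<notin> D" for i
      using that tv[of "unpos i"] unpos_in[of i] unfolding qx_def by auto
    then show ?thesis using qx_D D_sub by auto
  qed
  have mL: "strict_mono_on {1..k} (qx \<tau>)"
  proof (rule strict_mono_onI)
    fix i j assume ij: "i \<in> {1..k}" "j \<in> {1..k}" "i < j"
    have jD: "j \<notin> D"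
    proof
      assume "j \<in> D"
      from D_vals[OF this] ij show False by auto
    qed
    have jr: "j \<in> {1..k+l}" using ij by auto
    show "qx \<tau> i < qx \<tau> j"
    proof (cases "i \<in> D")
      case True
      have "qx \<tau> j = Suc (\<tau> (unpos j))" using jD jr by (simp add: qx_def)
      moreover have "\<tau> (unpos j) \<ge> 1" using tv[of "unpos j"] unpos_in[OF jr jD] by auto
      ultimately show ?thesis using qx_D[OF True] by simp
    next
      case False
      have ir: "i \<in> {1..k+l}" using ij by auto
      have u: "unpos i < unpos j" using unpos_mono ir jr False jD ij by blast
      have ui: "unpos i \<in> {1..k'+l'}" "pos (unpos i) = i" using unpos_in ir False by auto
      have uj: "unpos j \<in> {1..k'+l'}" "pos (unpos j) = j" using unpos_in jr jD by auto
      have "unpos i \<le> k'" "unpos j \<le> k'" using pos_left[OF ui(1)] pos_left[OF uj(1)] ui uj ij by auto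
      then have "\<tau> (unpos i) < \<tau> (unpos j)" using u ui uj by (intro strict_mono_onD[OF ml]) auto
      moreover have "qx \<tau> i = Suc (\<tau> (unpos i))" using qx_pos[OF ui(1), of \<tau>] ui(2) by simp
      moreover have "qx \<tau> j = Suc (\<tau> (unpos j))" using qx_pos[OF uj(1), of \<tau>] uj(2) by simp
      ultimately show ?thesis by simp
    qed
  qed
  have mR: "strict_mono_on {k+1..k+l} (qx \<tau>)"
  proof (rule strict_mono_onI)
    fix i j assume ij: "i \<in> {k+1..k+l}" "j \<in> {k+1..k+l}" "i < j"
    have jD: "j \<notin> D"
    proof
      assume "j \<in> D"
      from D_vals[OF this] ij show False by auto
    qed
    have jr: "j \<in> {1..k+l}" using ij by auto
    show "qx \<tau> i < qx \<tau> j"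
    proof (cases "i \<in> D")
      case True
      have "qx \<tau> j = Suc (\<tau> (unpos j))" using jD jr by (simp add: qx_def)
      moreover have "\<tau> (unpos j) \<ge> 1" using tv[of "unpos j"] unpos_in[OF jr jD] by auto
      ultimately show ?thesis using qx_D[OF True] by simp
    next
      case False
      have ir: "i \<in> {1..k+l}" using ij by auto
      have u: "unpos i < unpos j" using unpos_mono ir jr False jD ij by blast
      have ui: "unpos i \<in> {1..k'+l'}" "pos (unpos i) = i" using unpos_in ir False by auto
      have uj: "unpos j \<in> {1..k'+l'}" "pos (unpos j) = j" using unpos_in jr jD by auto
      have "\<not> unpos i \<le> k'" "\<not> unpos j \<le> k'" using pos_left[OF ui(1)] pos_left[OF uj(1)] ui uj ij by auto
      then have "\<tau> (unpos i) < \<tau> (unpos j)" using u ui uj by (intro strict_mono_onD[OF mr]) auto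
      moreover have "qx \<tau> i = Suc (\<tau> (unpos i))" using qx_pos[OF ui(1), of \<tau>] ui(2) by simp
      moreover have "qx \<tau> j = Suc (\<tau> (unpos j))" using qx_pos[OF uj(1), of \<tau>] uj(2) by simp
      ultimately show ?thesis by simp
    qed
  qed
  have "qx \<tau> \<in> extensional {1..k+l}" unfolding qx_def by (rule restrict_extensional)
  moreover have "\<exists>m. qx \<tau> ` {1..k+l} = {1..m}" using im2 by (rule exI)
  ultimately have "qx \<tau> \<in> QSh k l" unfolding QSh_def using mL mR by blast
  then show "qx \<tau> \<in> TT" unfolding TT_def using pre by blast
  show "card (qx \<tau> ` {1..k+l}) = Suc (card (\<tau> ` {1..k'+l'}))" using im im2 by simp
qed

lemma shr_QSh:
  assumes "\<sigma> \<in> TT"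
  shows "shr \<sigma> \<in> QSh k' l'"
proof -
  from assms obtain n where im: "\<sigma> ` {1..k+l} = {1..n}" and ml: "strict_mono_on {1..k} \<sigma>"
    and mr: "strict_mono_on {k+1..k+l} \<sigma>" and pre: "{i\<in>{1..k+l}. \<sigma> i = 1} = D"
    unfolding QSh_def TT_def by blast
  have sv: "\<sigma> i \<in> {2..n}" if "i \<in> {1..k+l}" "i \<notin> D" for i
  proof -
    have "\<sigma> i \<in> {1..n}" using im that by (metis imageI)
    moreover have "\<sigma> i \<noteq> 1" using pre that by auto
    ultimately show ?thesis by auto
  qed
  have sp: "shr \<sigma> i = \<sigma> (pos i) - 1" if "i \<in> {1..k'+l'}" for i using that unfolding shr_def by auto
  have im2: "shr \<sigma> ` {1..k'+l'} = {1..n-1}"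
  proof (rule set_eqI, rule iffI)
    fix y assume "y \<in> shr \<sigma> ` {1..k'+l'}"
    then obtain i where i: "i \<in> {1..k'+l'}" "y = shr \<sigma> i" by auto
    then show "y \<in> {1..n-1}" using sp sv[of "pos i"] pos_in[OF i(1)] by fastforce
  next
    fix y assume y: "y \<in> {1..n-1}"
    then have "Suc y \<in> \<sigma> ` {1..k+l}" using im by auto
    then obtain j where j0: "j \<in> {1..k+l}" "Suc y = \<sigma> j" by (rule imageE)
    then have j: "j \<in> {1..k+l}" "\<sigma> j = Suc y" by auto
    then have jD: "j \<notin> D" using pre y by auto
    have "shr \<sigma> (unpos j) = y" using sp unpos_in[OF j(1) jD] j by auto
    then show "y \<in> shr \<sigma> ` {1..k'+l'}" using unpos_in[OF j(1) jD] by (metis image_eqI)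
  qed
  have mL: "strict_mono_on {1..k'} (shr \<sigma>)"
  proof (rule strict_mono_onI)
    fix i j assume ij: "i \<in> {1..k'}" "j \<in> {1..k'}" "i < j"
    have ir: "i \<in> {1..k'+l'}" and jr: "j \<in> {1..k'+l'}" using ij by auto
    have "pos i < pos j" using pos_mono ir jr ij by blast
    moreover have "pos i \<in> {1..k}" "pos j \<in> {1..k}" using pos_in[OF ir] pos_in[OF jr] pos_left[OF ir] pos_left[OF jr] ij by auto
    ultimately have "\<sigma> (pos i) < \<sigma> (pos j)" using strict_mono_onD[OF ml] by auto
    moreover have "\<sigma> (pos i) \<ge> 2" using sv pos_in[OF ir] by fastforce
    ultimately show "shr \<sigma> i < shr \<sigma> j" using sp ir jr by auto
  qed
  have mR: "strict_mono_on {k'+1..k'+l'} (shr \<sigma>)"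
  proof (rule strict_mono_onI)
    fix i j assume ij: "i \<in> {k'+1..k'+l'}" "j \<in> {k'+1..k'+l'}" "i < j"
    have ir: "i \<in> {1..k'+l'}" and jr: "j \<in> {1..k'+l'}" using ij by auto
    have "pos i < pos j" using pos_mono ir jr ij by blast
    moreover have "pos i \<in> {k+1..k+l}" "pos j \<in> {k+1..k+l}" using pos_in[OF ir] pos_in[OF jr] pos_left[OF ir] pos_left[OF jr] ij by auto
    ultimately have "\<sigma> (pos i) < \<sigma> (pos j)" using strict_mono_onD[OF mr] by auto
    moreover have "\<sigma> (pos i) \<ge> 2" using sv pos_in[OF ir] by fastforce
    ultimately show "shr \<sigma> i < shr \<sigma> j" using sp ir jr by auto
  qed
  have "shr \<sigma> \<in> extensional {1..k'+l'}" unfolding shr_def by (rule restrict_extensional)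
  moreover have "\<exists>m. shr \<sigma> ` {1..k'+l'} = {1..m}" using im2 by (rule exI)
  ultimately show ?thesis unfolding QSh_def using mL mR by blast
qed

lemma shr_qx: assumes t: "\<tau> \<in> QSh k' l'" shows "shr (qx \<tau>) = \<tau>"
proof (rule ext)
  fix x
  have e: "\<tau> \<in> extensional {1..k'+l'}" using t unfolding QSh_def by blast
  show "shr (qx \<tau>) x = \<tau> x"
  proof (cases "x \<in> {1..k'+l'}")
    case True then show ?thesis using qx_pos[OF True] unfolding shr_def by simp
  next
    case False
    then show ?thesis using extensional_arb[OF e False] unfolding shr_def by auto
  qed
qed

lemma qx_shr: assumes s: "\<sigma> \<in> TT" shows "qx (shr \<sigma>) = \<sigma>"
proof (rule ext)
  fix x
  from s obtain n where im: "\<sigma> ` {1..k+l} = {1..n}" and pre: "{i\<in>{1..k+l}. \<sigma> i = 1} = D"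
    and e: "\<sigma> \<in> extensional {1..k+l}"
    unfolding QSh_def TT_def by blast
  show "qx (shr \<sigma>) x = \<sigma> x"
  proof (cases "x \<in> {1..k+l}")
    case True
    show ?thesis
    proof (cases "x \<in> D")
      case True then show ?thesis using qx_D pre by auto
    next
      case False
      have "\<sigma> x \<in> {1..n}" using im \<open>x \<in> {1..k+l}\<close> by (metis imageI)
      have u: "unpos x \<in> {1..k'+l'}" "pos (unpos x) = x" using unpos_in[OF \<open>x \<in> {1..k+l}\<close> False] by auto
      have "qx (shr \<sigma>) x = Suc (shr \<sigma> (unpos x))" using False \<open>x \<in> {1..k+l}\<close> unfolding qx_def by simp
      also have "\<dots> = Suc (\<sigma> x - 1)" using u unfolding shr_def by simp
      also have "\<dots> = \<sigma> x" using \<open>\<sigma> x \<in> {1..n}\<close> by simp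
      finally show ?thesis .
    qed
  next
    case False
    then show ?thesis using extensional_arb[OF e False] unfolding qx_def by auto
  qed
qed

lemma sum_TT: "(\<Sum>\<sigma>\<in>TT. f \<sigma>) = (\<Sum>\<tau>\<in>QSh k' l'. f (qx \<tau>))"
proof (rule sum.reindex_bij_witness[of "QSh k' l'" shr qx, symmetric])
  fix a assume "a \<in> QSh k' l'"
  then show "shr (qx a) = a" "qx a \<in> TT" using shr_qx qx_QSh(1) by blast+
next
  fix b assume "b \<in> TT"
  then show "qx (shr b) = b" "shr b \<in> QSh k' l'" using qx_shr shr_QSh by blast+
qed simp

end



context qext begin

lemma filt_L:
  assumes t: "\<tau> \<in> QSh k' l'" and q: "q \<ge> 1"
  shows "filter (\<lambda>i. qx \<tau> i = Suc q) [1..<k+1] = map pos (filter (\<lambda>i. \<tau> i = q) [1..<k'+1])"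
proof -
  have "filter (\<lambda>i. qx \<tau> i = Suc q) [1..<k+1] = filter (\<lambda>i. qx \<tau> i = Suc q) (filter (\<lambda>i. i \<notin> D) [1..<k+1])"
    unfolding filter_filter by (rule filter_cong) (use q qx_D in \<open>auto simp del: upt_Suc\<close>)
  also have "\<dots> = map pos (filter (\<lambda>i. qx \<tau> (pos i) = Suc q) [1..<k'+1])"
    by (simp only: filt_left filter_map o_def)
  also have "\<dots> = map pos (filter (\<lambda>i. \<tau> i = q) [1..<k'+1])"
    by (intro arg_cong[where f="map pos"] filter_cong) (auto simp: qx_pos simp del: upt_Suc)
  finally show ?thesis .
qed

lemma filt_R:
  assumes t: "\<tau> \<in> QSh k' l'" and q: "q \<ge> 1"
  shows "filter (\<lambda>i. qx \<tau> i = Suc q) [k+1..<k+l+1] = map pos (filter (\<lambda>i. \<tau> i = q) [k'+1..<k'+l'+1])"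
proof -
  have "filter (\<lambda>i. qx \<tau> i = Suc q) [k+1..<k+l+1] = filter (\<lambda>i. qx \<tau> i = Suc q) (filter (\<lambda>i. i \<notin> D) [k+1..<k+l+1])"
    unfolding filter_filter by (rule filter_cong) (use q qx_D in \<open>auto simp del: upt_Suc\<close>)
  also have "\<dots> = map pos (filter (\<lambda>i. qx \<tau> (pos i) = Suc q) [k'+1..<k'+l'+1])"
    by (simp only: filt_right filter_map o_def)
  also have "\<dots> = map pos (filter (\<lambda>i. \<tau> i = q) [k'+1..<k'+l'+1])"
    by (intro arg_cong[where f="map pos"] filter_cong) (auto simp: qx_pos simp del: upt_Suc)
  finally show ?thesis .
qed

lemma filt_1:
  assumes t: "\<tau> \<in> QSh k' l'" and ab: "1 \<le> a" "b \<le> k+l+1"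
  shows "filter (\<lambda>i. qx \<tau> i = 1) [a..<b] = filter (\<lambda>i. i \<in> D) [a..<b]"
proof -
  have pre: "{i\<in>{1..k+l}. qx \<tau> i = 1} = D" using qx_QSh(1)[OF t] unfolding TT_def by blast
  show ?thesis
  proof (rule filter_cong[OF refl])
    fix x assume "x \<in> set [a..<b]"
    then have x: "x \<in> {1..k+l}" using ab by auto
    then have "(qx \<tau> x = 1) = (x \<in> {i\<in>{1..k+l}. qx \<tau> i = 1})" by simp
    then show "(qx \<tau> x = 1) = (x \<in> D)" by (simp only: pre)
  qed
qed

lemma ladder_qx:
  assumes t: "\<tau> \<in> QSh k' l'" and FF: "\<And>i. i \<in> {1..k'+l'} \<Longrightarrow> FF!(pos i - 1) = FF'!(i-1)"
    and p: "p \<ge> 1"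
  shows "ladder FF (qx \<tau>) k l m (Suc p) = ladder FF' \<tau> k' l' m p"
proof (rule ladder_shift[OF _ _ p])
  fix q :: nat assume q: "q \<ge> 1"
  show "concat (map (\<lambda>i. FF!(i-1)) (filter (\<lambda>i. qx \<tau> i = Suc q) [1..<k+1]))
      = concat (map (\<lambda>i. FF'!(i-1)) (filter (\<lambda>i. \<tau> i = q) [1..<k'+1]))"
    unfolding filt_L[OF t q] map_map o_def
    by (rule arg_cong[where f=concat], rule map_cong[OF refl], rule FF) (auto simp del: upt_Suc)
  show "concat (map (\<lambda>i. FF!(i-1)) (filter (\<lambda>i. qx \<tau> i = Suc q) [k+1..<k+l+1]))
      = concat (map (\<lambda>i. FF'!(i-1)) (filter (\<lambda>i. \<tau> i = q) [k'+1..<k'+l'+1]))"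
    unfolding filt_R[OF t q] map_map o_def
    by (rule arg_cong[where f=concat], rule map_cong[OF refl], rule FF) (auto simp del: upt_Suc)
qed

lemma sig_qx:
  assumes t: "\<tau> \<in> QSh k' l'" and FF: "\<And>i. i \<in> {1..k'+l'} \<Longrightarrow> FF!(pos i - 1) = FF'!(i-1)"
  shows "ladder FF (qx \<tau>) k l (card (qx \<tau> ` {1..k+l})) 1 =
    Node (concat (map (\<lambda>i. FF!(i-1)) (filter (\<lambda>i. i \<in> D) [1..<k+1]))
      @ ladder FF' \<tau> k' l' (card (\<tau> ` {1..k'+l'})) 1
      # concat (map (\<lambda>i. FF!(i-1)) (filter (\<lambda>i. i \<in> D) [k+1..<k+l+1])))"
proof -
  have "ladder FF (qx \<tau>) k l (card (\<tau> ` {1..k'+l'})) (Suc 1) = ladder FF' \<tau> k' l' (card (\<tau> ` {1..k'+l'})) 1"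
    by (rule ladder_qx[OF t FF]) auto
  moreover have c: "card (qx \<tau> ` {1..k+l}) = Suc (card (\<tau> ` {1..k'+l'}))" by (rule qx_QSh(2)[OF t])
  moreover have "filter (\<lambda>i. qx \<tau> i = 1) [1..<k+1] = filter (\<lambda>i. i \<in> D) [1..<k+1]"
    by (rule filt_1[OF t]) auto
  moreover have "filter (\<lambda>i. qx \<tau> i = 1) [k+1..<k+l+1] = filter (\<lambda>i. i \<in> D) [k+1..<k+l+1]"
    by (rule filt_1[OF t]) auto
  ultimately show ?thesis by (simp only: c ladder.simps(2) append_Cons append_Nil One_nat_def)
qed

end



interpretation qL: qext "Suc k'" l k' l "{1}" Suc "\<lambda>j. j - 1" for k' l
proof
  show "filter (\<lambda>i. i \<notin> {1}) [1..<Suc k' + 1] = map Suc [1..<k' + 1]"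
    by (simp add: upt_conv_Cons map_Suc_upt del: upt_Suc)
  show "filter (\<lambda>i. i \<notin> {1}) [Suc k' + 1..<Suc k' + l + 1] = map Suc [k' + 1..<k' + l + 1]"
    by (simp add: map_Suc_upt del: upt_Suc)
qed auto

interpretation qR: qext k "Suc l'" k l' "{k+1}" "\<lambda>i. if i \<le> k then i else Suc i"
  "\<lambda>j. if j \<le> k then j else j - 1" for k l'
proof
  have "map (\<lambda>i. if i \<le> k then i else Suc i) [1..<k+1] = [1..<k+1]" by (rule map_idI) (auto simp del: upt_Suc)
  moreover have "filter (\<lambda>i. i \<notin> {k+1}) [1..<k+1] = [1..<k+1]" by (rule filter_True) (auto simp del: upt_Suc)
  ultimately show "filter (\<lambda>i. i \<notin> {k+1}) [1..<k + 1] = map (\<lambda>i. if i \<le> k then i else Suc i) [1..<k + 1]"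
    by simp
  have "map (\<lambda>i. if i \<le> k then i else Suc i) [k + 1..<k + l' + 1] = map Suc [k + 1..<k + l' + 1]"
    by (rule map_cong) (auto simp del: upt_Suc)
  then show "filter (\<lambda>i. i \<notin> {k+1}) [k + 1..<k + Suc l' + 1] = map (\<lambda>i. if i \<le> k then i else Suc i) [k + 1..<k + l' + 1]"
    by (simp add: upt_conv_Cons map_Suc_upt del: upt_Suc)
qed auto

interpretation qB: qext "Suc k'" "Suc l'" k' l' "{1, Suc k' + 1}" "\<lambda>i. if i \<le> k' then Suc i else Suc (Suc i)"
  "\<lambda>j. if j \<le> Suc k' then j - 1 else j - 2" for k' l'
proof
  have "map (\<lambda>i. if i \<le> k' then Suc i else Suc (Suc i)) [1..<k' + 1] = map Suc [1..<k' + 1]"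
    by (rule map_cong) (auto simp del: upt_Suc)
  then show "filter (\<lambda>i. i \<notin> {1, Suc k' + 1}) [1..<Suc k' + 1] = map (\<lambda>i. if i \<le> k' then Suc i else Suc (Suc i)) [1..<k' + 1]"
    by (simp add: upt_conv_Cons map_Suc_upt filter_id_conv del: upt_Suc)
  have "map (\<lambda>i. if i \<le> k' then Suc i else Suc (Suc i)) [k' + 1..<k' + l' + 1] = map (Suc o Suc) [k' + 1..<k' + l' + 1]"
    by (rule map_cong) (auto simp del: upt_Suc)
  then show "filter (\<lambda>i. i \<notin> {1, Suc k' + 1}) [Suc k' + 1..<Suc k' + Suc l' + 1] = map (\<lambda>i. if i \<le> k' then Suc i else Suc (Suc i)) [k' + 1..<k' + l' + 1]"
    by (simp add: upt_conv_Cons map_Suc_upt filter_id_conv del: upt_Suc flip: map_map)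
qed auto




definition SS :: "tree \<Rightarrow> tree \<Rightarrow> tree multiset" where
  "SS t s = (\<Sum>\<sigma>\<in>QSh (length (rbranch t)) (length (lbranch s)). {#sigma_tree \<sigma> t s#})"

definition ST :: "nat set \<Rightarrow> tree \<Rightarrow> tree \<Rightarrow> tree multiset" where
  "ST D t s = (let k = length (rbranch t); l = length (lbranch s) in
     (\<Sum>\<sigma>\<in>{\<sigma>\<in>QSh k l. {i\<in>{1..k+l}. \<sigma> i = 1} = D}. {#sigma_tree \<sigma> t s#}))"

lemma filt_single: "a \<le> x \<Longrightarrow> x < b \<Longrightarrow> filter (\<lambda>i. i \<in> {x}) [a..<b] = [x]"
  by (induction b) (auto simp: filter_empty_conv)

lemma filt_none: "x \<notin> {a..<b} \<Longrightarrow> filter (\<lambda>i. i \<in> {x}) [a..<b] = []"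
  by (auto simp: filter_empty_conv)

lemma caseL:
  assumes xs: "xs \<noteq> []"
  shows "ST {1} (Node xs) s = image_mset (\<lambda>x. Node (butlast xs @ [x])) (SS (last xs) s)"
proof -
  define k' where "k' = length (rbranch (last xs))"
  define l where "l = length (lbranch s)"
  define FF' where "FF' = rbranch (last xs) @ lbranch s"
  have rb: "rbranch (Node xs) = butlast xs # rbranch (last xs)" using xs by simp
  have k: "length (rbranch (Node xs)) = Suc k'" using rb k'_def by simp
  have FF: "rbranch (Node xs) @ lbranch s = butlast xs # FF'" using rb FF'_def by simp
  have cond: "(butlast xs # FF') ! (Suc i - 1) = FF' ! (i - 1)" if "i \<in> {1..k'+l}" for i
    using that by (cases i) auto
  have st: "sigma_tree (qL.qx k' l \<tau>) (Node xs) s = Node (butlast xs @ [sigma_tree \<tau> (last xs) s])"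
    if t: "\<tau> \<in> QSh k' l" for \<tau>
  proof -
    have "sigma_tree (qL.qx k' l \<tau>) (Node xs) s
        = ladder (butlast xs # FF') (qL.qx k' l \<tau>) (Suc k') l (card (qL.qx k' l \<tau> ` {1..Suc k'+l})) 1"
      unfolding sigma_tree_def Let_def k FF l_def by simp
    also have "\<dots> = Node (concat (map (\<lambda>i. (butlast xs # FF')!(i-1)) (filter (\<lambda>i. i \<in> {1}) [1..<Suc k'+1]))
      @ ladder FF' \<tau> k' l (card (\<tau> ` {1..k'+l})) 1
      # concat (map (\<lambda>i. (butlast xs # FF')!(i-1)) (filter (\<lambda>i. i \<in> {1}) [Suc k'+1..<Suc k'+l+1])))"
      by (rule qL.sig_qx[OF t cond])
    also have "\<dots> = Node (butlast xs @ [sigma_tree \<tau> (last xs) s])"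
      using filt_single[of 1 1 "Suc k'+1"] filt_none[of 1 "Suc k'+1" "Suc k'+l+1"]
      unfolding sigma_tree_def Let_def FF'_def k'_def l_def by simp
    finally show ?thesis .
  qed
  have "ST {1} (Node xs) s = (\<Sum>\<sigma>\<in>qL.TT k' l. {#sigma_tree \<sigma> (Node xs) s#})"
    unfolding ST_def Let_def k qL.TT_def l_def by simp
  also have "\<dots> = (\<Sum>\<tau>\<in>QSh k' l. {#sigma_tree (qL.qx k' l \<tau>) (Node xs) s#})"
    by (rule qL.sum_TT)
  also have "\<dots> = (\<Sum>\<tau>\<in>QSh k' l. {#Node (butlast xs @ [sigma_tree \<tau> (last xs) s])#})"
  proof (rule sum.cong[OF refl])
    fix \<tau> assume h: "\<tau> \<in> QSh k' l"
    show "{#sigma_tree (qL.qx k' l \<tau>) (Node xs) s#} = {#Node (butlast xs @ [sigma_tree \<tau> (last xs) s])#}"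
      by (simp only: st[OF h])
  qed
  also have "\<dots> = image_mset (\<lambda>x. Node (butlast xs @ [x])) (SS (last xs) s)"
    unfolding SS_def image_mset_sum_set k'_def l_def by simp
  finally show ?thesis .
qed

lemma caseR:
  assumes ys: "ys \<noteq> []"
  shows "ST {length (rbranch t) + 1} t (Node ys) = image_mset (\<lambda>x. Node (x # tl ys)) (SS t (hd ys))"
proof -
  define k where "k = length (rbranch t)"
  define l' where "l' = length (lbranch (hd ys))"
  define R where "R = rbranch t"
  define B where "B = lbranch (hd ys)"
  have lb: "lbranch (Node ys) = tl ys # lbranch (hd ys)" using ys by simp
  have l: "length (lbranch (Node ys)) = Suc l'" using lb l'_def by simp
  have FF: "rbranch t @ lbranch (Node ys) = R @ tl ys # B" using lb R_def B_def by simp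
  have lR: "length R = k" using R_def k_def by simp
  have cond: "(R @ tl ys # B) ! ((if i \<le> k then i else Suc i) - 1) = (R @ B) ! (i - 1)" if "i \<in> {1..k+l'}" for i
  proof (cases "i \<le> k")
    case True
    then have "i - 1 < k" using that by auto
    then show ?thesis using True lR by (simp add: nth_append)
  next
    case False
    then have "Suc i - 1 - k = Suc (i - 1 - k)" "\<not> i - 1 < k" by auto
    then show ?thesis using that lR False by (simp add: nth_append)
  qed
  have st: "sigma_tree (qR.qx k l' \<tau>) t (Node ys) = Node (sigma_tree \<tau> t (hd ys) # tl ys)"
    if t: "\<tau> \<in> QSh k l'" for \<tau>
  proof -
    have "sigma_tree (qR.qx k l' \<tau>) t (Node ys)
        = ladder (R @ tl ys # B) (qR.qx k l' \<tau>) k (Suc l') (card (qR.qx k l' \<tau> ` {1..k+Suc l'})) 1"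
      unfolding sigma_tree_def Let_def l FF k_def by simp
    also have "\<dots> = Node (concat (map (\<lambda>i. (R @ tl ys # B)!(i-1)) (filter (\<lambda>i. i \<in> {k+1}) [1..<k+1]))
      @ ladder (R @ B) \<tau> k l' (card (\<tau> ` {1..k+l'})) 1
      # concat (map (\<lambda>i. (R @ tl ys # B)!(i-1)) (filter (\<lambda>i. i \<in> {k+1}) [k+1..<k+Suc l'+1])))"
      by (rule qR.sig_qx[OF t cond])
    also have "\<dots> = Node (sigma_tree \<tau> t (hd ys) # tl ys)"
      using filt_single[of "k+1" "k+1" "k+Suc l'+1"] filt_none[of "k+1" 1 "k+1"] lR
      unfolding sigma_tree_def Let_def R_def B_def k_def l'_def by (simp add: nth_append)
    finally show ?thesis .
  qed
  have "ST {length (rbranch t) + 1} t (Node ys) = (\<Sum>\<sigma>\<in>qR.TT k l'. {#sigma_tree \<sigma> t (Node ys)#})"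
    unfolding ST_def Let_def l qR.TT_def k_def by simp
  also have "\<dots> = (\<Sum>\<tau>\<in>QSh k l'. {#sigma_tree (qR.qx k l' \<tau>) t (Node ys)#})"
    by (rule qR.sum_TT)
  also have "\<dots> = (\<Sum>\<tau>\<in>QSh k l'. {#Node (sigma_tree \<tau> t (hd ys) # tl ys)#})"
  proof (rule sum.cong[OF refl])
    fix \<tau> assume h: "\<tau> \<in> QSh k l'"
    show "{#sigma_tree (qR.qx k l' \<tau>) t (Node ys)#} = {#Node (sigma_tree \<tau> t (hd ys) # tl ys)#}"
      by (simp only: st[OF h])
  qed
  also have "\<dots> = image_mset (\<lambda>x. Node (x # tl ys)) (SS t (hd ys))"
    unfolding SS_def image_mset_sum_set k_def l'_def by simp
  finally show ?thesis .
qed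

lemma caseB:
  assumes xs: "xs \<noteq> []" and ys: "ys \<noteq> []"
  shows "ST {1, length (rbranch (Node xs)) + 1} (Node xs) (Node ys)
     = image_mset (\<lambda>x. Node (butlast xs @ x # tl ys)) (SS (last xs) (hd ys))"
proof -
  define k' where "k' = length (rbranch (last xs))"
  define l' where "l' = length (lbranch (hd ys))"
  define R where "R = rbranch (last xs)"
  define B where "B = lbranch (hd ys)"
  have rb: "rbranch (Node xs) = butlast xs # rbranch (last xs)" using xs by simp
  have k: "length (rbranch (Node xs)) = Suc k'" using rb k'_def by simp
  have lb: "lbranch (Node ys) = tl ys # lbranch (hd ys)" using ys by simp
  have l: "length (lbranch (Node ys)) = Suc l'" using lb l'_def by simp
  have FF: "rbranch (Node xs) @ lbranch (Node ys) = butlast xs # R @ tl ys # B" using lb rb R_def B_def by simp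
  have lR: "length R = k'" using R_def k'_def by simp
  have cond: "(butlast xs # R @ tl ys # B) ! ((if i \<le> k' then Suc i else Suc (Suc i)) - 1) = (R @ B) ! (i - 1)"
    if "i \<in> {1..k'+l'}" for i
  proof (cases "i \<le> k'")
    case True
    then have "Suc i - 1 = Suc (i - 1)" "i - 1 < k'" using that by auto
    then show ?thesis using lR by (simp add: nth_append)
  next
    case False
    then have "i - k' = Suc (i - 1 - k')" "\<not> i - 1 < k'" by auto
    then show ?thesis using that lR False by (simp add: nth_append)
  qed
  have st: "sigma_tree (qB.qx k' l' \<tau>) (Node xs) (Node ys) = Node (butlast xs @ sigma_tree \<tau> (last xs) (hd ys) # tl ys)"
    if t: "\<tau> \<in> QSh k' l'" for \<tau>
  proof -
    have f1: "filter (\<lambda>i. i \<in> {1, Suc k' + 1}) [1..<Suc k'+1] = [1]"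
    proof -
      have "filter (\<lambda>i. i \<in> {1, Suc k' + 1}) [1..<Suc k'+1] = filter (\<lambda>i. i \<in> {1}) [1..<Suc k'+1]"
        by (rule filter_cong[OF refl]) (auto simp del: upt_Suc)
      then show ?thesis using filt_single[of 1 1 "Suc k'+1"] by simp
    qed
    have f2: "filter (\<lambda>i. i \<in> {1, Suc k' + 1}) [Suc k'+1..<Suc k'+Suc l'+1] = [Suc k'+1]"
    proof -
      have "filter (\<lambda>i. i \<in> {1, Suc k' + 1}) [Suc k'+1..<Suc k'+Suc l'+1] = filter (\<lambda>i. i \<in> {Suc k'+1}) [Suc k'+1..<Suc k'+Suc l'+1]"
        by (rule filter_cong[OF refl]) (auto simp del: upt_Suc)
      then show ?thesis using filt_single[of "Suc k'+1" "Suc k'+1" "Suc k'+Suc l'+1"] by simp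
    qed
    have "sigma_tree (qB.qx k' l' \<tau>) (Node xs) (Node ys)
        = ladder (butlast xs # R @ tl ys # B) (qB.qx k' l' \<tau>) (Suc k') (Suc l') (card (qB.qx k' l' \<tau> ` {1..Suc k'+Suc l'})) 1"
      unfolding sigma_tree_def Let_def l FF k by simp
    also have "\<dots> = Node (concat (map (\<lambda>i. (butlast xs # R @ tl ys # B)!(i-1)) (filter (\<lambda>i. i \<in> {1, Suc k' + 1}) [1..<Suc k'+1]))
      @ ladder (R @ B) \<tau> k' l' (card (\<tau> ` {1..k'+l'})) 1
      # concat (map (\<lambda>i. (butlast xs # R @ tl ys # B)!(i-1)) (filter (\<lambda>i. i \<in> {1, Suc k' + 1}) [Suc k'+1..<Suc k'+Suc l'+1])))"
      by (rule qB.sig_qx[OF t cond])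
    also have "\<dots> = Node (butlast xs @ sigma_tree \<tau> (last xs) (hd ys) # tl ys)"
      unfolding f1 f2 using lR
      unfolding sigma_tree_def Let_def R_def B_def k'_def l'_def by (simp add: nth_append)
    finally show ?thesis .
  qed
  have "ST {1, length (rbranch (Node xs)) + 1} (Node xs) (Node ys) = (\<Sum>\<sigma>\<in>qB.TT k' l'. {#sigma_tree \<sigma> (Node xs) (Node ys)#})"
    unfolding ST_def Let_def l qB.TT_def k by simp
  also have "\<dots> = (\<Sum>\<tau>\<in>QSh k' l'. {#sigma_tree (qB.qx k' l' \<tau>) (Node xs) (Node ys)#})"
    by (rule qB.sum_TT)
  also have "\<dots> = (\<Sum>\<tau>\<in>QSh k' l'. {#Node (butlast xs @ sigma_tree \<tau> (last xs) (hd ys) # tl ys)#})"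
  proof (rule sum.cong[OF refl])
    fix \<tau> assume h: "\<tau> \<in> QSh k' l'"
    show "{#sigma_tree (qB.qx k' l' \<tau>) (Node xs) (Node ys)#} = {#Node (butlast xs @ sigma_tree \<tau> (last xs) (hd ys) # tl ys)#}"
      by (simp only: st[OF h])
  qed
  also have "\<dots> = image_mset (\<lambda>x. Node (butlast xs @ x # tl ys)) (SS (last xs) (hd ys))"
    unfolding SS_def image_mset_sum_set k'_def l'_def by simp
  finally show ?thesis .
qed




lemma graft_L: "graft (map (\<lambda>a. {#a#}) as @ [M]) = image_mset (\<lambda>x. Node (as @ [x])) M"
  using graft_mid[of as M "[]"] by simp

lemma graft_R: "graft (M # map (\<lambda>a. {#a#}) bs) = image_mset (\<lambda>x. Node (x # bs)) M"
  using graft_mid[of "[]" M bs] by simp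

lemma prec_eq: "xs \<noteq> [] \<Longrightarrow> prod Prec (Node xs) s = image_mset (\<lambda>x. Node (butlast xs @ [x])) (prod Star (last xs) s)"
  by (subst prod.simps(3)) (simp add: graft_L del: prod.simps)

lemma succ_eq: "ys \<noteq> [] \<Longrightarrow> prod Succ t (Node ys) = image_mset (\<lambda>x. Node (x # tl ys)) (prod Star t (hd ys))"
  by (subst prod.simps(8)) (simp add: graft_R del: prod.simps)

lemma dot_eq: "xs \<noteq> [] \<Longrightarrow> ys \<noteq> [] \<Longrightarrow> prod Dot (Node xs) (Node ys)
   = image_mset (\<lambda>x. Node (butlast xs @ x # tl ys)) (prod Star (last xs) (hd ys))"
  by (subst prod.simps(6)) (simp add: graft_mid del: prod.simps)

lemma wf_node: assumes "wf_tree (Node xs)" shows "xs \<noteq> []" "wf_tree (last xs)" "wf_tree (hd xs)"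
proof -
  show ne: "xs \<noteq> []" using assms by auto
  have "\<forall>x\<in>set xs. wf_tree x" using assms by (simp add: list_all_iff)
  then show "wf_tree (last xs)" "wf_tree (hd xs)" using ne by auto
qed

lemma SS_eq_ST:
  assumes "\<And>\<sigma>. \<sigma> \<in> QSh (length (rbranch t)) (length (lbranch s)) \<Longrightarrow>
     {i\<in>{1..length (rbranch t) + length (lbranch s)}. \<sigma> i = 1} = D"
  shows "SS t s = ST D t s"
proof -
  have eq: "{\<sigma>\<in>QSh (length (rbranch t)) (length (lbranch s)). {i\<in>{1..length (rbranch t) + length (lbranch s)}. \<sigma> i = 1} = D}
     = QSh (length (rbranch t)) (length (lbranch s))"
    using assms by blast
  show ?thesis unfolding SS_def ST_def Let_def eq ..
qed

lemma SS_split: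
  assumes k: "length (rbranch t) \<ge> 1"
  shows "SS t s = ST {1} t s + ST {1, length (rbranch t) + 1} t s + ST {length (rbranch t) + 1} t s"
proof -
  define k where "k = length (rbranch t)"
  define l where "l = length (lbranch s)"
  define f where "f = (\<lambda>\<sigma>. {#sigma_tree \<sigma> t s#})"
  define P where "P = (\<lambda>\<sigma>::nat\<Rightarrow>nat. {i\<in>{1..k+l}. \<sigma> i = 1})"
  define A where "A = {\<sigma>\<in>QSh k l. P \<sigma> = {1}}"
  define B where "B = {\<sigma>\<in>QSh k l. P \<sigma> = {1, k+1}}"
  define C where "C = {\<sigma>\<in>QSh k l. P \<sigma> = {k+1}}"
  have kk: "k \<ge> 1" using k k_def by simp
  have U: "QSh k l = A \<union> B \<union> C"
  proof
    show "QSh k l \<subseteq> A \<union> B \<union> C"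
    proof
      fix \<sigma> assume h: "\<sigma> \<in> QSh k l"
      have "k + l \<ge> 1" using kk by simp
      from QSh_pre1[OF h this] have "P \<sigma> = {1} \<or> P \<sigma> = {1, k+1} \<or> P \<sigma> = {k+1}" unfolding P_def .
      then show "\<sigma> \<in> A \<union> B \<union> C" unfolding A_def B_def C_def using h by blast
    qed
    show "A \<union> B \<union> C \<subseteq> QSh k l" unfolding A_def B_def C_def by blast
  qed
  have d1: "{1::nat} \<noteq> {1, k+1}" "{1::nat} \<noteq> {k+1}" "{1::nat, k+1} \<noteq> {k+1}" using kk by auto
  have fin: "finite A" "finite B" "finite C" unfolding A_def B_def C_def using QSh_finite by auto
  have dAB: "A \<inter> B = {}" using d1 unfolding A_def B_def by blast
  have dABC: "(A \<union> B) \<inter> C = {}" using d1 unfolding A_def B_def C_def by blast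
  have "SS t s = sum f (QSh k l)" unfolding SS_def f_def k_def l_def ..
  also have "\<dots> = sum f (A \<union> B \<union> C)" unfolding U ..
  also have "\<dots> = sum f A + sum f B + sum f C"
    using fin dAB dABC by (simp add: sum.union_disjoint)
  also have "sum f A = ST {1} t s" unfolding ST_def Let_def A_def P_def f_def k_def l_def ..
  also have "sum f B = ST {1, length (rbranch t) + 1} t s" unfolding ST_def Let_def B_def P_def f_def k_def l_def ..
  also have "sum f C = ST {length (rbranch t) + 1} t s" unfolding ST_def Let_def C_def P_def f_def k_def l_def ..
  finally show ?thesis .
qed

lemma QSh00: "QSh 0 0 = {\<lambda>_. undefined}"
proof -
  have "\<sigma> \<in> QSh 0 0 \<longleftrightarrow> \<sigma> = (\<lambda>_. undefined)" for \<sigma>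
  proof
    assume "\<sigma> \<in> QSh 0 0"
    then have "\<sigma> \<in> extensional {}" unfolding QSh_def by simp
    then show "\<sigma> = (\<lambda>_. undefined)" by (auto simp: extensional_def)
  next
    assume "\<sigma> = (\<lambda>_. undefined)"
    then show "\<sigma> \<in> QSh 0 0" unfolding QSh_def by (auto simp: strict_mono_on_def)
  qed
  then show ?thesis by blast
qed

lemma star_SS: "wf_tree t \<Longrightarrow> wf_tree s \<Longrightarrow> prod Star t s = SS t s"
proof (induction "size t + size s" arbitrary: t s rule: less_induct)
  case less
  show ?case
  proof (cases t)
    case Leaf
    note t = Leaf
    show ?thesis
    proof (cases s)
      case Leaf
      show ?thesis using t Leaf by (simp add: SS_def sigma_tree_def QSh00)
    next
      case (Node ys)
      have ys: "ys \<noteq> []" "wf_tree (hd ys)" using less.prems Node wf_node by auto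
      have l1: "length (lbranch s) \<ge> 1" using ys Node by simp
      have "SS t s = ST {length (rbranch t) + 1} t s"
      proof (rule SS_eq_ST)
        fix \<sigma> assume h: "\<sigma> \<in> QSh (length (rbranch t)) (length (lbranch s))"
        have "length (rbranch t) + length (lbranch s) \<ge> 1" using l1 by simp
        from QSh_pre1[OF h this] t
        show "{i \<in> {1..length (rbranch t) + length (lbranch s)}. \<sigma> i = 1} = {length (rbranch t) + 1}"
          by simp
      qed
      also have "\<dots> = image_mset (\<lambda>x. Node (x # tl ys)) (SS t (hd ys))" unfolding Node by (rule caseR[OF ys(1)])
      also have "SS t (hd ys) = prod Star t (hd ys)"
        using less.hyps[of t "hd ys"] ys less.prems Node size_hd_less[OF ys(1)] by (simp del: prod.simps)
      also have "prod Star t (hd ys) = {#hd ys#}" using t by simp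
      finally have "SS t s = {#Node (hd ys # tl ys)#}" by simp
      moreover have "prod Star t s = {#s#}" using t by simp
      ultimately show ?thesis using Node ys by simp
    qed
  next
    case (Node xs)
    note t = Node
    have xs: "xs \<noteq> []" "wf_tree (last xs)" using less.prems Node wf_node by auto
    have k1: "length (rbranch t) \<ge> 1" using xs Node by simp
    show ?thesis
    proof (cases s)
      case Leaf
      have "SS t s = ST {1} t s"
      proof (rule SS_eq_ST)
        fix \<sigma> assume h: "\<sigma> \<in> QSh (length (rbranch t)) (length (lbranch s))"
        have l0: "length (lbranch s) = 0" using Leaf by simp
        have nk: "length (rbranch t) + 1 \<notin> {i \<in> {1..length (rbranch t) + length (lbranch s)}. \<sigma> i = 1}"
          using l0 by simp
        have "length (rbranch t) + length (lbranch s) \<ge> 1" using k1 by simp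
        from QSh_pre1[OF h this] nk
        show "{i \<in> {1..length (rbranch t) + length (lbranch s)}. \<sigma> i = 1} = {1}"
          by blast
      qed
      also have "\<dots> = image_mset (\<lambda>x. Node (butlast xs @ [x])) (SS (last xs) s)" unfolding t by (rule caseL[OF xs(1)])
      also have "SS (last xs) s = prod Star (last xs) s"
        using less.hyps[of "last xs" s] xs less.prems t size_last_less[OF xs(1)] by (simp del: prod.simps)
      also have "prod Star (last xs) s = {#last xs#}" using Leaf by simp
      finally have "SS t s = {#Node (butlast xs @ [last xs])#}" by simp
      moreover have "prod Star t s = {#t#}" using Leaf by simp
      ultimately show ?thesis using t xs by simp
    next
      case (Node ys)
      note s = Node
      have ys: "ys \<noteq> []" "wf_tree (hd ys)" using less.prems Node wf_node by auto
      have IH1: "SS (last xs) s = prod Star (last xs) s"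
        using less.hyps[of "last xs" s] xs less.prems t size_last_less[OF xs(1)] by (simp del: prod.simps)
      have IH2: "SS t (hd ys) = prod Star t (hd ys)"
        using less.hyps[of t "hd ys"] ys less.prems s size_hd_less[OF ys(1)] by (simp del: prod.simps)
      have IH3: "SS (last xs) (hd ys) = prod Star (last xs) (hd ys)"
        using less.hyps[of "last xs" "hd ys"] xs ys size_last_less[OF xs(1)] size_hd_less[OF ys(1)] t s
        by (simp del: prod.simps)
      have "SS t s = ST {1} t s + ST {1, length (rbranch t) + 1} t s + ST {length (rbranch t) + 1} t s"
        by (rule SS_split[OF k1])
      also have "\<dots> = prod Prec t s + prod Dot t s + prod Succ t s"
        unfolding t s caseL[OF xs(1)] caseB[OF xs(1) ys(1)] caseR[OF ys(1)]
          prec_eq[OF xs(1)] dot_eq[OF xs(1) ys(1)] succ_eq[OF ys(1)]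
        unfolding t[symmetric] s[symmetric] IH1 IH2 IH3 ..
      also have "\<dots> = prod Star t s" using t s by (simp only: prod.simps(1) tree.distinct if_False)
      finally show ?thesis by simp
    qed
  qed
qed

theorem mainTheorem9:
  fixes t s :: tree
  assumes "wf_tree t" and "wf_tree s" and "t \<noteq> Leaf" and "s \<noteq> Leaf"
  defines "k \<equiv> length (rbranch t)" and "l \<equiv> length (lbranch s)"
  shows "prec t s = (\<Sum>\<sigma>\<in>{\<sigma>\<in>QSh k l. {i\<in>{1..k+l}. \<sigma> i = 1} = {1}}. {#sigma_tree \<sigma> t s#})
     \<and> dotp t s = (\<Sum>\<sigma>\<in>{\<sigma>\<in>QSh k l. {i\<in>{1..k+l}. \<sigma> i = 1} = {1, k+1}}. {#sigma_tree \<sigma> t s#})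
     \<and> succ t s = (\<Sum>\<sigma>\<in>{\<sigma>\<in>QSh k l. {i\<in>{1..k+l}. \<sigma> i = 1} = {k+1}}. {#sigma_tree \<sigma> t s#})"
proof -
  obtain xs where t: "t = Node xs" using assms(3) by (cases t) auto
  obtain ys where s: "s = Node ys" using assms(4) by (cases s) auto
  have xs: "xs \<noteq> []" "wf_tree (last xs)" using assms(1) t wf_node by auto
  have ys: "ys \<noteq> []" "wf_tree (hd ys)" using assms(2) s wf_node by auto
  have S: "\<And>D. (\<Sum>\<sigma>\<in>{\<sigma>\<in>QSh k l. {i\<in>{1..k+l}. \<sigma> i = 1} = D}. {#sigma_tree \<sigma> t s#}) = ST D t s"
    unfolding ST_def Let_def k_def l_def by simp
  have IH1: "SS (last xs) s = prod Star (last xs) s" using star_SS xs assms(2) by simp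
  have IH2: "SS t (hd ys) = prod Star t (hd ys)" using star_SS ys assms(1) by simp
  have IH3: "SS (last xs) (hd ys) = prod Star (last xs) (hd ys)" using star_SS xs ys by simp
  have "prec t s = ST {1} t s"
    unfolding prec_def t caseL[OF xs(1)] prec_eq[OF xs(1)] using IH1 t by simp
  moreover have "dotp t s = ST {1, k+1} t s"
    unfolding dotp_def t s k_def caseB[OF xs(1) ys(1)] dot_eq[OF xs(1) ys(1)] using IH3 by simp
  moreover have "succ t s = ST {k+1} t s"
    unfolding succ_def s k_def caseR[OF ys(1)] succ_eq[OF ys(1)] using IH2 s by simp
  ultimately show ?thesis unfolding S by simp
qed


end
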